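(* Let $Z\subset\mathbb{R}^d$ be a zonotope with $v$ vertices and let $\mathcal{H}_Z$ denote the family of all homothets of $Z$. Then for every finite set $S\subset\mathbb{R}^d$ and every $\epsilon>0$ there is a set $W\subset\mathbb{R}^d$ with $|W|\le v/\epsilon$ such that $W\cap Z'\neq\emptyset$ for every $Z'\in\mathcal{H}_Z$ with $|Z'\cap S|\ge\epsilon|S|$.
   Context: A zonotope is a centrally symmetric convex polytope all of whose faces are centrally symmetric. A homothet of $Z$ is $\lambda Z+x$ with $\lambda>0$, $x\in\mathbb{R}^d$. *)

theory Defs
  imports "HOL-Analysis.Analysis"
begin

definition centrally_symmetric :: "'a::real_vector set \<Rightarrow> bool" where
  "centrally_symmetric A \<longleftrightarrow> (\<exists>c. \<forall>x\<in>A. 2 *\<^sub>R c - x \<in> A)"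

definition zonotope :: "'a::euclidean_space set \<Rightarrow> bool" where
  "zonotope Z \<longleftrightarrow> polytope Z \<and> centrally_symmetric Z \<and>
     (\<forall>F. F face_of Z \<longrightarrow> centrally_symmetric F)"

definition homothets :: "'a::real_vector set \<Rightarrow> 'a set set" where
  "homothets Z = {(\<lambda>z. lam *\<^sub>R z + x) ` Z | lam x. lam > 0}"

end

theory Submission
  imports Defs
begin


lemma cs_center:
  fixes F :: "'a::euclidean_space set"
  assumes "centrally_symmetric F" "convex F" "F \<noteq> {}"
  obtains c where "c \<in> F" "\<And>x. x \<in> F \<Longrightarrow> 2 *\<^sub>R c - x \<in> F"
proof -
  obtain c where c: "\<And>x. x \<in> F \<Longrightarrow> 2 *\<^sub>R c - x \<in> F"
    using assms(1) unfolding centrally_symmetric_def by blast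
  obtain x where x: "x \<in> F" using assms(3) by blast
  have "c = (1/2) *\<^sub>R x + (1/2) *\<^sub>R (2 *\<^sub>R c - x)" by (simp add: algebra_simps)
  also have "\<dots> \<in> F" using convexD[OF assms(2) x c[OF x]] by simp
  finally show ?thesis using that c by blast
qed

lemma center_rel_interior:
  fixes P :: "'a::euclidean_space set"
  assumes "convex P" "P \<noteq> {}" "\<And>x. x \<in> P \<Longrightarrow> 2 *\<^sub>R c - x \<in> P"
  shows "c \<in> rel_interior P"
proof -
  obtain x where x: "x \<in> rel_interior P" using assms rel_interior_eq_empty by blast
  show ?thesis
  proof (cases "x = c")
    case True then show ?thesis using x by simp
  next
    case False
    have "2 *\<^sub>R c - x \<in> closure P" using assms(3) x rel_interior_subset closure_subset by blast
    then have "open_segment x (2 *\<^sub>R c - x) \<subseteq> rel_interior P"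
      using rel_interior_closure_convex_segment[OF assms(1) x] by blast
    moreover have "c \<in> open_segment x (2 *\<^sub>R c - x)"
    proof -
      have "midpoint x (2 *\<^sub>R c - x) = c" by (simp add: midpoint_def algebra_simps)
      moreover have "x \<noteq> 2 *\<^sub>R c - x"
      proof
        assume "x = 2 *\<^sub>R c - x"
        then have "x + x = 2 *\<^sub>R c" by (metis add_diff_cancel_left' diff_add_cancel)
        then have "2 *\<^sub>R x = 2 *\<^sub>R c" by (simp add: scaleR_2)
        then show False using False by simp
      qed
      ultimately show ?thesis by (metis midpoint_in_open_segment)
    qed
    ultimately show ?thesis by blast
  qed
qed

lemma TL_aux:
  fixes P :: "'a::euclidean_space set"
  shows "nat (aff_dim P + 1) = n \<Longrightarrow> polytope P \<Longrightarrow> (\<forall>F. F face_of P \<longrightarrow> centrally_symmetric F)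
    \<Longrightarrow> x \<in> P \<Longrightarrow> y \<in> P \<Longrightarrow> \<exists>u. u extreme_point_of P \<and> u - (x - y) \<in> P"
proof (induction n arbitrary: P x y rule: less_induct)
  case (less n P x y)
  have cvx: "convex P" using less.prems(2) polytope_imp_convex by blast
  have cpt: "compact P" using less.prems(2) polytope_imp_compact by blast
  have "centrally_symmetric P" using less.prems(3) face_of_refl[OF cvx] by blast
  then obtain c where c: "c \<in> P" "\<And>z. z\<in>P \<Longrightarrow> 2 *\<^sub>R c - z \<in> P"
    using cs_center[OF _ cvx] less.prems(4) by blast
  show ?case
  proof (cases "x = y")
    case True
    obtain u where "u extreme_point_of P" using extreme_point_exists_convex[OF cpt cvx] less.prems(4) by blast
    then show ?thesis using True by (auto simp: extreme_point_of_def)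
  next
    case False
    define l where "l = (1/2) *\<^sub>R (x - y)"
    have l0: "l \<noteq> 0" using False by (simp add: l_def)
    have "c + l = (1/2) *\<^sub>R x + (1/2) *\<^sub>R (2 *\<^sub>R c - y)" by (simp add: l_def algebra_simps)
    also have "\<dots> \<in> P" using convexD[OF cvx less.prems(4) c(2)[OF less.prems(5)], of "1/2" "1/2"] by simp
    finally have cl: "c + l \<in> P" .
    have aff: "c + l \<in> affine hull P" by (rule hull_inc[OF cl])
    have cri: "c \<in> rel_interior P" using center_rel_interior[OF cvx _ c(2)] c(1) by blast
    obtain d where d: "0<d" "c + d *\<^sub>R l \<in> rel_frontier P"
      using ray_to_rel_frontier[OF compact_imp_bounded[OF cpt] cri aff l0] by blast
    have d1: "1 \<le> d"
    proof (rule ccontr)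
      assume "\<not> 1 \<le> d"
      have "c + d *\<^sub>R l \<in> open_segment c (c + l)"
        unfolding in_segment using l0 d(1) \<open>\<not> 1 \<le> d\<close>
        by (auto intro!: exI[of _ d] simp: algebra_simps)
      moreover have "open_segment c (c + l) \<subseteq> rel_interior P"
        using rel_interior_closure_convex_segment[OF cvx cri] cl closure_subset by blast
      ultimately show False using d(2) by (auto simp: rel_frontier_def)
    qed
    define b where "b = c + d *\<^sub>R l"
    obtain F where F: "F face_of P" "F \<noteq> P" "b \<in> F"
      using d(2) rel_frontier_of_polyhedron_alt[OF polytope_imp_polyhedron[OF less.prems(2)]]
      unfolding b_def by blast
    have cvF: "convex F" using F(1) face_of_imp_convex by blast
    have polF: "polytope F" using face_of_polytope_polytope[OF less.prems(2) F(1)] .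
    have FP: "F \<subseteq> P" using F(1) face_of_imp_subset by blast
    have facesF: "\<forall>G. G face_of F \<longrightarrow> centrally_symmetric G"
      using less.prems(3) F(1) by (meson face_of_trans)
    have "centrally_symmetric F" using facesF face_of_refl[OF cvF] by blast
    then obtain cF where cF: "cF \<in> F" "\<And>z. z \<in> F \<Longrightarrow> 2 *\<^sub>R cF - z \<in> F"
      using cs_center[OF _ cvF] F(3) by blast
    define g where "g = 1/d"
    have g0: "0 < g" "g \<le> 1" using d(1) d1 by (auto simp: g_def)
    define f2 where "f2 = 2 *\<^sub>R cF - b"
    define f1 where "f1 = g *\<^sub>R b + (1-g) *\<^sub>R f2"
    have f2F: "f2 \<in> F" using cF(2)[OF F(3)] by (simp add: f2_def)
    have f1F: "f1 \<in> F" unfolding f1_def using convexD[OF cvF F(3) f2F, of g "1-g"] g0 by simp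
    have "aff_dim F < aff_dim P" using face_of_aff_dim_lt[OF cvx F(1) F(2)] .
    moreover have "aff_dim F \<ge> -1" by (rule aff_dim_geq)
    ultimately have lt: "nat (aff_dim F + 1) < n" using less.prems(1) by linarith
    obtain u where u: "u extreme_point_of F" "u - (f1 - f2) \<in> F"
      using less.IH[OF lt refl polF facesF f1F f2F] by blast
    have uP: "u extreme_point_of P" using u(1) extreme_point_of_face[OF F(1)] by blast
    define f where "f = u - (f1 - f2)"
    have "2 *\<^sub>R cF - f \<in> P" using cF(2)[OF u(2)] FP unfolding f_def by blast
    then have "2 *\<^sub>R c - (2 *\<^sub>R cF - f) \<in> P" using c(2) by blast
    then have e2: "f + 2 *\<^sub>R (c - cF) \<in> P" by (simp add: algebra_simps)
    have e1: "f \<in> P" using u(2) FP unfolding f_def by blast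
    have xy: "x - y = (2 * g) *\<^sub>R (b - c)" using d(1) by (simp add: b_def l_def g_def)
    have ff: "f1 - f2 = g *\<^sub>R (2 *\<^sub>R b - 2 *\<^sub>R cF)"
      by (simp add: f1_def f2_def algebra_simps flip: scaleR_2)
    have "u - (x - y) = (1-g) *\<^sub>R f + g *\<^sub>R (f + 2 *\<^sub>R (c - cF))"
      unfolding xy f_def ff by (simp add: algebra_simps)
    also have "\<dots> \<in> P" using convexD[OF cvx e1 e2, of "1-g" g] g0 by simp
    finally show ?thesis using uP by blast
  qed
qed



lemma TL:
  fixes P :: "'a::euclidean_space set"
  assumes "polytope P" "\<forall>F. F face_of P \<longrightarrow> centrally_symmetric F" "x \<in> P" "y \<in> P"
  shows "\<exists>u. u extreme_point_of P \<and> u - (x - y) \<in> P"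
  using TL_aux[OF refl assms] .

lemma HL:
  fixes Z :: "'a::euclidean_space set"
  assumes "polytope Z" "\<forall>F. F face_of Z \<longrightarrow> centrally_symmetric F"
    and "0 < lam1" "lam1 \<le> lam" "a \<in> Z" "b \<in> Z" "lam1 *\<^sub>R a + x1 = lam *\<^sub>R b + x"
  shows "\<exists>u. u extreme_point_of Z \<and> lam1 *\<^sub>R u + x1 \<in> (\<lambda>z. lam *\<^sub>R z + x) ` Z"
proof -
  obtain u where u: "u extreme_point_of Z" "u - (a - b) \<in> Z" using TL[OF assms(1,2,5,6)] by blast
  define z0 where "z0 = u - (a - b)"
  define t where "t = lam1 / lam"
  have t: "0 \<le> t" "t \<le> 1" "lam > 0" using assms(3,4) by (auto simp: t_def)
  have cvx: "convex Z" using assms(1) polytope_imp_convex by blast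
  have zin: "t *\<^sub>R z0 + (1 - t) *\<^sub>R b \<in> Z"
    using convexD[OF cvx u(2)[folded z0_def] assms(6), of t "1-t"] t by simp
  have "lam *\<^sub>R (t *\<^sub>R z0 + (1 - t) *\<^sub>R b) + x = lam1 *\<^sub>R z0 + (lam - lam1) *\<^sub>R b + x"
    using t(3) by (simp add: t_def algebra_simps)
  also have "\<dots> = lam1 *\<^sub>R u + x1"
  proof -
    have "x = lam1 *\<^sub>R a + x1 - lam *\<^sub>R b" using assms(7) by (simp add: algebra_simps)
    then show ?thesis by (simp add: z0_def algebra_simps)
  qed
  finally show ?thesis using u(1) zin by (metis image_eqI)
qed



lemma closed_Sa:
  fixes Z :: "'a::euclidean_space set"
  assumes "compact Z" "compact K"
  shows "closed {p \<in> K. a \<in> (\<lambda>z. fst p *\<^sub>R z + snd p) ` Z}"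
proof -
  let ?f = "\<lambda>q::(real \<times> 'a) \<times> 'a. fst (fst q) *\<^sub>R snd q + snd (fst q)"
  have cf: "continuous_on UNIV ?f" by (intro continuous_intros)
  have "closed {q. ?f q = a}" by (rule closed_Collect_eq[OF cf continuous_on_const])
  then have "compact ((K \<times> Z) \<inter> {q. ?f q = a})"
    by (intro compact_Int_closed compact_Times assms)
  then have cc: "compact (fst ` ((K \<times> Z) \<inter> {q. ?f q = a}))"
    by (rule compact_continuous_image[rotated]) (intro continuous_on_fst continuous_on_id)
  have eq: "fst ` ((K \<times> Z) \<inter> {q. ?f q = a}) = {p \<in> K. a \<in> (\<lambda>z. fst p *\<^sub>R z + snd p) ` Z}"
  proof (intro set_eqI iffI)
    fix p assume "p \<in> fst ` ((K \<times> Z) \<inter> {q. ?f q = a})"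
    then obtain q where q: "fst q \<in> K" "snd q \<in> Z" "?f q = a" "p = fst q" by (auto simp: mem_Times_iff)
    then have "a \<in> (\<lambda>z. fst p *\<^sub>R z + snd p) ` Z" by (intro image_eqI[of _ _ "snd q"]) auto
    then show "p \<in> {p \<in> K. a \<in> (\<lambda>z. fst p *\<^sub>R z + snd p) ` Z}" using q by simp
  next
    fix p assume "p \<in> {p \<in> K. a \<in> (\<lambda>z. fst p *\<^sub>R z + snd p) ` Z}"
    then obtain z where z: "p \<in> K" "z \<in> Z" "a = fst p *\<^sub>R z + snd p" by blast
    show "p \<in> fst ` ((K \<times> Z) \<inter> {q. ?f q = a})"
      by (rule image_eqI[of _ _ "(p, z)"]) (use z in auto)
  qed
  show ?thesis using compact_imp_closed[OF cc] unfolding eq .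
qed



lemma min_homothet:
  fixes Z :: "'a::euclidean_space set" and T :: "'a set"
  assumes Zc: "compact Z" and Zne: "Z \<noteq> {}" and Tf: "finite T" and m1: "m > 1"
    and l0: "lam0 > 0" and h0: "m \<le> real (card ((\<lambda>z. lam0 *\<^sub>R z + x0) ` Z \<inter> T))"
  obtains lam1 x1 where "lam1 > 0" "m \<le> real (card ((\<lambda>z. lam1 *\<^sub>R z + x1) ` Z \<inter> T))"
    "\<And>lam x. lam > 0 \<Longrightarrow> m \<le> real (card ((\<lambda>z. lam *\<^sub>R z + x) ` Z \<inter> T)) \<Longrightarrow> lam1 \<le> lam"
proof -
  obtain B where B: "\<And>z. z \<in> Z \<Longrightarrow> norm z \<le> B"
    using compact_imp_bounded[OF Zc] bounded_iff by blast
  have B0: "0 \<le> B" using Zne B norm_ge_zero order_trans by blast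
  obtain R1 where R1: "\<And>a. a \<in> T \<Longrightarrow> norm a \<le> R1"
    using finite_imp_bounded[OF Tf] bounded_iff by blast
  define R where "R = R1 + lam0 * B"
  have xb: "norm x \<le> R" if "0 \<le> lam" "lam \<le> lam0" "a \<in> T" "z \<in> Z" "a = lam *\<^sub>R z + x" for lam x a z
  proof -
    have "x = a - lam *\<^sub>R z" using that(5) by simp
    then have "norm x \<le> norm a + norm (lam *\<^sub>R z)" using norm_triangle_ineq4[of a "lam *\<^sub>R z"] by simp
    also have "\<dots> \<le> R1 + lam * B" using R1[OF that(3)] B[OF that(4)] that(1) by (simp add: add_mono mult_left_mono)
    also have "\<dots> \<le> R" unfolding R_def using that(2) B0 by (simp add: mult_right_mono)
    finally show ?thesis .
  qed
  define K where "K = {0..lam0} \<times> cball (0::'a) R"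
  have Kc: "compact K" unfolding K_def by (intro compact_Times compact_Icc compact_cball)
  define H where "H = (\<lambda>p::real \<times> 'a. (\<lambda>z. fst p *\<^sub>R z + snd p) ` Z)"
  define C where "C = {p \<in> K. m \<le> real (card (H p \<inter> T))}"
  define \<A> where "\<A> = {A. A \<subseteq> T \<and> m \<le> real (card A)}"
  have Ceq: "C = (\<Union>A\<in>\<A>. K \<inter> (\<Inter>a\<in>A. {p \<in> K. a \<in> H p}))"
  proof (intro set_eqI iffI)
    fix p assume "p \<in> C"
    then show "p \<in> (\<Union>A\<in>\<A>. K \<inter> (\<Inter>a\<in>A. {p \<in> K. a \<in> H p}))"
      unfolding C_def \<A>_def by (intro UN_I[of "H p \<inter> T"]) auto
  next
    fix p assume "p \<in> (\<Union>A\<in>\<A>. K \<inter> (\<Inter>a\<in>A. {p \<in> K. a \<in> H p}))"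
    then obtain A where A: "A \<subseteq> T" "m \<le> real (card A)" "p \<in> K" "A \<subseteq> H p" unfolding \<A>_def by blast
    have "card A \<le> card (H p \<inter> T)" using A Tf by (intro card_mono) auto
    then show "p \<in> C" using A unfolding C_def by auto
  qed
  have fin: "finite \<A>" unfolding \<A>_def using Tf by (rule rev_finite_subset[OF finite_Pow_iff[THEN iffD2]]) auto
  have "compact C" unfolding Ceq
  proof (intro compact_UN fin)
    fix A assume "A \<in> \<A>"
    have "closed (\<Inter>a\<in>A. {p \<in> K. a \<in> H p})"
      unfolding H_def using closed_Sa[OF Zc Kc] by (intro closed_INT) blast
    then show "compact (K \<inter> (\<Inter>a\<in>A. {p \<in> K. a \<in> H p}))" using compact_Int_closed Kc by blast
  qed
  moreover have "(lam0, x0) \<in> C"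
  proof -
    have "card ((\<lambda>z. lam0 *\<^sub>R z + x0) ` Z \<inter> T) > 0" using h0 m1 by linarith
    then obtain a where "a \<in> (\<lambda>z. lam0 *\<^sub>R z + x0) ` Z \<inter> T" by (metis card_gt_0_iff ex_in_conv)
    then obtain z where "z \<in> Z" "a \<in> T" "a = lam0 *\<^sub>R z + x0" by blast
    then have "norm x0 \<le> R" using xb[of lam0] l0 by auto
    then show ?thesis using l0 h0 unfolding C_def K_def H_def by auto
  qed
  ultimately obtain p where p: "p \<in> C" "\<And>q. q \<in> C \<Longrightarrow> fst p \<le> fst q"
    using continuous_attains_inf[of C fst] continuous_on_fst[OF continuous_on_id] by blast
  have pos: "fst p > 0"
  proof (rule ccontr)
    assume "\<not> fst p > 0"
    moreover have "fst p \<ge> 0" using p(1) unfolding C_def K_def by auto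
    ultimately have "fst p = 0" by simp
    then have "H p = {snd p}" unfolding H_def using Zne by auto
    then have "card (H p \<inter> T) \<le> 1" by (simp add: card_le_Suc0_iff_eq)
    then show False using p(1) m1 unfolding C_def by auto
  qed
  show ?thesis
  proof (rule that[of "fst p" "snd p"])
    show "0 < fst p" by (rule pos)
    show "m \<le> real (card ((\<lambda>z. fst p *\<^sub>R z + snd p) ` Z \<inter> T))" using p(1) unfolding C_def H_def by auto
  next
    fix lam x assume lx: "0 < lam" "m \<le> real (card ((\<lambda>z. lam *\<^sub>R z + x) ` Z \<inter> T))"
    show "fst p \<le> lam"
    proof (cases "lam \<le> lam0")
      case False
      have "fst p \<le> lam0" using p(2)[OF \<open>(lam0, x0) \<in> C\<close>] by simp
      then show ?thesis using False by simp
    next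
      case True
      have "card ((\<lambda>z. lam *\<^sub>R z + x) ` Z \<inter> T) > 0" using lx m1 by linarith
      then obtain a where "a \<in> (\<lambda>z. lam *\<^sub>R z + x) ` Z \<inter> T" by (metis card_gt_0_iff ex_in_conv)
      then obtain z where "z \<in> Z" "a \<in> T" "a = lam *\<^sub>R z + x" by blast
      then have "norm x \<le> R" using xb[of lam] lx True by auto
      then have "(lam, x) \<in> C" using lx True unfolding C_def K_def H_def by auto
      then show ?thesis using p(2) by fastforce
    qed
  qed
qed



lemma greedy:
  fixes Z :: "'a::euclidean_space set"
  assumes Zp: "polytope Z" and Zf: "\<forall>F. F face_of Z \<longrightarrow> centrally_symmetric F"
    and Zne: "Z \<noteq> {}" and m1: "m > 1"
  shows "finite T \<Longrightarrow> \<exists>W. finite W \<and>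
     real (card W) \<le> real (card {p. p extreme_point_of Z}) * real (card T) / m \<and>
     (\<forall>Z'\<in>homothets Z. m \<le> real (card (Z' \<inter> T)) \<longrightarrow> W \<inter> Z' \<noteq> {})"
proof (induction "card T" arbitrary: T rule: less_induct)
  case less
  define E where "E = {p. p extreme_point_of Z}"
  have Ef: "finite E" unfolding E_def
    by (rule finite_polyhedron_extreme_points[OF polytope_imp_polyhedron[OF Zp]])
  have Zc: "compact Z" using Zp polytope_imp_compact by blast
  have m0: "m > 0" using m1 by simp
  show ?case
  proof (cases "\<exists>lam x. lam > 0 \<and> m \<le> real (card ((\<lambda>z. lam *\<^sub>R z + x) ` Z \<inter> T))")
    case False
    have "\<forall>Z'\<in>homothets Z. m \<le> real (card (Z' \<inter> T)) \<longrightarrow> {} \<inter> Z' \<noteq> {}"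
      using False unfolding homothets_def by blast
    moreover have "real (card ({}::'a set)) \<le> real (card E) * real (card T) / m" using m0 by simp
    ultimately show ?thesis unfolding E_def by (intro exI[of _ "{}"]) auto
  next
    case True
    then obtain lam0 x0 where h0: "lam0 > 0" "m \<le> real (card ((\<lambda>z. lam0 *\<^sub>R z + x0) ` Z \<inter> T))"
      by blast
    obtain lam1 x1 where l1: "lam1 > 0" "m \<le> real (card ((\<lambda>z. lam1 *\<^sub>R z + x1) ` Z \<inter> T))"
      and l1min: "\<And>lam x. lam > 0 \<Longrightarrow> m \<le> real (card ((\<lambda>z. lam *\<^sub>R z + x) ` Z \<inter> T)) \<Longrightarrow> lam1 \<le> lam"
      using min_homothet[OF Zc Zne less.prems m1 h0] by blast
    define Z1 where "Z1 = (\<lambda>z. lam1 *\<^sub>R z + x1) ` Z"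
    define T' where "T' = T - Z1"
    have T'f: "finite T'" using less.prems by (simp add: T'_def)
    have cT: "card T = card T' + card (Z1 \<inter> T)"
    proof -
      have "T = T' \<union> (Z1 \<inter> T)" "T' \<inter> (Z1 \<inter> T) = {}" unfolding T'_def by auto
      then show ?thesis using card_Un_disjoint[OF T'f, of "Z1 \<inter> T"] less.prems by (metis finite_Int)
    qed
    have mZ1: "m \<le> real (card (Z1 \<inter> T))" using l1(2) unfolding Z1_def .
    have lt: "card T' < card T" using cT mZ1 m0 by linarith
    obtain W' where W': "finite W'" "real (card W') \<le> real (card E) * real (card T') / m"
      "\<forall>Z'\<in>homothets Z. m \<le> real (card (Z' \<inter> T')) \<longrightarrow> W' \<inter> Z' \<noteq> {}"
      using less.hyps[OF lt T'f] unfolding E_def by blast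
    define W where "W = W' \<union> (\<lambda>z. lam1 *\<^sub>R z + x1) ` E"
    have Wf: "finite W" unfolding W_def using W'(1) Ef by simp
    have "card W \<le> card W' + card ((\<lambda>z. lam1 *\<^sub>R z + x1) ` E)" unfolding W_def by (rule card_Un_le)
    also have "\<dots> \<le> card W' + card E" using card_image_le[OF Ef] by simp
    finally have "real (card W) \<le> real (card W') + real (card E)" by linarith
    also have "\<dots> \<le> real (card E) * real (card T') / m + real (card E)" using W'(2) by simp
    also have "\<dots> = real (card E) * (real (card T') + m) / m" using m0 by (simp add: field_simps)
    also have "\<dots> \<le> real (card E) * real (card T) / m"
      using cT mZ1 m0 by (intro divide_right_mono mult_left_mono) auto
    finally have Wc: "real (card W) \<le> real (card E) * real (card T) / m" .
    have hit: "W \<inter> Z' \<noteq> {}" if Z'h: "Z' \<in> homothets Z" and Z'm: "m \<le> real (card (Z' \<inter> T))" for Z'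
    proof -
      obtain lam x where lx: "lam > 0" "Z' = (\<lambda>z. lam *\<^sub>R z + x) ` Z" using Z'h unfolding homothets_def by blast
      have le: "lam1 \<le> lam" using l1min[OF lx(1)] Z'm lx(2) by simp
      show ?thesis
      proof (cases "Z' \<inter> Z1 = {}")
        case True
        then have "Z' \<inter> T' = Z' \<inter> T" unfolding T'_def by blast
        then show ?thesis using W'(3) Z'h Z'm unfolding W_def by auto
      next
        case False
        then obtain q where "q \<in> Z'" "q \<in> Z1" by blast
        then obtain a b where ab: "a \<in> Z" "b \<in> Z" "q = lam1 *\<^sub>R a + x1" "q = lam *\<^sub>R b + x"
          unfolding Z1_def lx(2) by blast
        obtain u where u: "u extreme_point_of Z" "lam1 *\<^sub>R u + x1 \<in> Z'"
          using HL[OF Zp Zf l1(1) le ab(1,2)] ab(3,4) lx(2) by metis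
        have "lam1 *\<^sub>R u + x1 \<in> W" unfolding W_def E_def using u(1) by blast
        then show ?thesis using u(2) by blast
      qed
    qed
    show ?thesis using Wf Wc hit unfolding E_def by blast
  qed
qed

theorem mainTheorem20:
  fixes Z :: "'a::euclidean_space set" and S :: "'a set" and \<epsilon> :: real
  assumes "zonotope Z"
    and "finite S" and "S \<noteq> {}"
    and "\<epsilon> > 0"
  shows "\<exists>W. finite W \<and> real (card W) \<le> real (card {p. p extreme_point_of Z}) / \<epsilon> \<and>
           (\<forall>Z'\<in>homothets Z. real (card (Z' \<inter> S)) \<ge> \<epsilon> * real (card S) \<longrightarrow> W \<inter> Z' \<noteq> {})"
proof -
  have Zp: "polytope Z" and Zf: "\<forall>F. F face_of Z \<longrightarrow> centrally_symmetric F"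
    using assms(1) unfolding zonotope_def by auto
  define E where "E = {p. p extreme_point_of Z}"
  have Ef: "finite E" unfolding E_def
    by (rule finite_polyhedron_extreme_points[OF polytope_imp_polyhedron[OF Zp]])
  have n0: "card S > 0" using assms(2,3) by (simp add: card_gt_0_iff)
  have en0: "\<epsilon> * real (card S) > 0" using n0 assms(4) by simp
  show ?thesis
  proof (cases "Z = {}")
    case True
    have "\<forall>Z'\<in>homothets Z. Z' = {}" using True unfolding homothets_def by auto
    then show ?thesis using en0 assms(4) by (intro exI[of _ "{}"]) auto
  next
    case Zne: False
    have Zc: "compact Z" using Zp polytope_imp_compact by blast
    have cvx: "convex Z" using Zp polytope_imp_convex by blast
    obtain u where "u extreme_point_of Z" using extreme_point_exists_convex[OF Zc cvx Zne] by blast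
    then have "u \<in> E" unfolding E_def by simp
    then have v1: "card E \<ge> 1" using Ef by (metis One_nat_def Suc_leI card_gt_0_iff empty_iff)
    show ?thesis
    proof (cases "\<epsilon> * real (card S) \<le> 1")
      case True
      have "real (card S) \<le> 1 / \<epsilon>" using True assms(4) by (simp add: field_simps)
      also have "\<dots> \<le> real (card E) / \<epsilon>" using v1 assms(4) by (simp add: divide_right_mono)
      finally have c: "real (card S) \<le> real (card E) / \<epsilon>" .
      have "S \<inter> Z' \<noteq> {}" if "real (card (Z' \<inter> S)) \<ge> \<epsilon> * real (card S)" for Z'
      proof
        assume "S \<inter> Z' = {}"
        then have "Z' \<inter> S = {}" by blast
        then show False using that en0 by simp
      qed
      then show ?thesis using c assms(2) unfolding E_def by blast
    next
      case False
      obtain W where W: "finite W" "real (card W) \<le> real (card E) * real (card S) / (\<epsilon> * real (card S))"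
        "\<forall>Z'\<in>homothets Z. \<epsilon> * real (card S) \<le> real (card (Z' \<inter> S)) \<longrightarrow> W \<inter> Z' \<noteq> {}"
        using greedy[OF Zp Zf Zne _ assms(2), of "\<epsilon> * real (card S)"] False unfolding E_def by force
      have "real (card E) * real (card S) / (\<epsilon> * real (card S)) = real (card E) / \<epsilon>"
        using n0 by simp
      then show ?thesis using W unfolding E_def by auto
    qed
  qed
qed


end
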